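(* Let $G$ be a finitely generated group whose growth function satisfies $\gamma_G(n)\succcurlyeq 2^{n^{\alpha}}$ for some $\alpha\in(0,1]$. Then $\mathrm{WP}_G\notin\mathrm{DTIME}_1(o(n^{1+\alpha}))$.
   Context: The growth function $\gamma_G(n)$ is the number of elements of word length at most $n$ with respect to a finite symmetric generating set. For nondecreasing functions, $f\succcurlyeq g$ means there is $C>0$ with $g(n)\le f(Cn)$ for all $n$. $\mathrm{WP}_G$ is the word problem $\{w\in S^{*}: w=_G e\}$; $\mathrm{DTIME}_1(o(t(n)))$ is the class of languages decided in time $o(t(n))$ by a deterministic single-tape Turing machine. *)

theory Defs
  imports "HOL-Algebra.Generated_Groups" "HOL-Library.Landau_Symbols"
begin

definition eval_word :: "('a, 'b) monoid_scheme \<Rightarrow> 'a list \<Rightarrow> 'a" where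
  "eval_word G w = foldr (\<lambda>s g. s \<otimes>\<^bsub>G\<^esub> g) w \<one>\<^bsub>G\<^esub>"

definition fin_sym_gen_set :: "('a, 'b) monoid_scheme \<Rightarrow> 'a set \<Rightarrow> bool" where
  "fin_sym_gen_set G S \<longleftrightarrow> finite S \<and> S \<subseteq> carrier G
     \<and> (\<forall>s\<in>S. inv\<^bsub>G\<^esub> s \<in> S) \<and> generate G S = carrier G"

definition growth :: "('a, 'b) monoid_scheme \<Rightarrow> 'a set \<Rightarrow> nat \<Rightarrow> nat" where
  "growth G S n = card {g. \<exists>w\<in>lists S. length w \<le> n \<and> eval_word G w = g}"

definition dominates :: "(nat \<Rightarrow> real) \<Rightarrow> (nat \<Rightarrow> real) \<Rightarrow> bool" where
  "dominates f g \<longleftrightarrow> (\<exists>C::nat. C > 0 \<and> (\<forall>n. g n \<le> f (C * n)))"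

definition word_problem :: "('a, 'b) monoid_scheme \<Rightarrow> 'a set \<Rightarrow> 'a list set" where
  "word_problem G S = {w \<in> lists S. eval_word G w = \<one>\<^bsub>G\<^esub>}"

text \<open>Tape symbols are of type 'a + nat: input letters Inl s (s in the input
  alphabet), blank Inr 0, further work symbols Inr k. A machine is a tuple
  (Q, Gamma, delta, q0, qacc, qrej); delta q c = (q', c', d) with head move
  d \<in> {-1,0,1}.\<close>

type_synonym 'a tm =
  "nat set \<times> ('a + nat) set \<times> (nat \<Rightarrow> 'a + nat \<Rightarrow> nat \<times> ('a + nat) \<times> int) \<times> nat \<times> nat \<times> nat"

type_synonym 'a config = "nat \<times> (int \<Rightarrow> 'a + nat) \<times> int"

definition blank :: "'a + nat" where "blank = Inr 0"

definition wf_tm :: "'a set \<Rightarrow> 'a tm \<Rightarrow> bool" where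
  "wf_tm \<Sigma> M = (case M of (Q, \<Gamma>, \<delta>, q0, qa, qr) \<Rightarrow>
     finite Q \<and> finite \<Gamma> \<and> q0 \<in> Q \<and> qa \<in> Q \<and> qr \<in> Q \<and> qa \<noteq> qr
     \<and> blank \<in> \<Gamma> \<and> Inl ` \<Sigma> \<subseteq> \<Gamma>
     \<and> (\<forall>q\<in>Q. \<forall>c\<in>\<Gamma>. case \<delta> q c of (q', c', d) \<Rightarrow>
            q' \<in> Q \<and> c' \<in> \<Gamma> \<and> d \<in> {-1, 0, 1}))"

definition initial_config :: "'a tm \<Rightarrow> 'a list \<Rightarrow> 'a config" where
  "initial_config M w = (case M of (Q, \<Gamma>, \<delta>, q0, qa, qr) \<Rightarrow>
     (q0, (\<lambda>i. if 0 \<le> i \<and> nat i < length w then Inl (w ! nat i) else blank), 0))"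

definition tm_step :: "'a tm \<Rightarrow> 'a config \<Rightarrow> 'a config" where
  "tm_step M c = (case M of (Q, \<Gamma>, \<delta>, q0, qa, qr) \<Rightarrow>
     (case c of (q, tp, h) \<Rightarrow>
        if q = qa \<or> q = qr then c
        else (case \<delta> q (tp h) of (q', c', d) \<Rightarrow> (q', tp(h := c'), h + d))))"

definition tm_run :: "'a tm \<Rightarrow> 'a list \<Rightarrow> nat \<Rightarrow> 'a config" where
  "tm_run M w k = (tm_step M ^^ k) (initial_config M w)"

definition decides_in_time ::
    "'a set \<Rightarrow> 'a tm \<Rightarrow> 'a list set \<Rightarrow> (nat \<Rightarrow> nat) \<Rightarrow> bool" where
  "decides_in_time \<Sigma> M L T \<longleftrightarrow> wf_tm \<Sigma> M \<and>
     (\<forall>w\<in>lists \<Sigma>. case M of (Q, \<Gamma>, \<delta>, q0, qa, qr) \<Rightarrow>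
        fst (tm_run M w (T (length w))) = (if w \<in> L then qa else qr))"

definition DTIME1_o :: "'a set \<Rightarrow> (nat \<Rightarrow> real) \<Rightarrow> 'a list set set" where
  "DTIME1_o \<Sigma> t = {L. L \<subseteq> lists \<Sigma> \<and> (\<exists>M T. decides_in_time \<Sigma> M L T
        \<and> (\<lambda>n. real (T n)) \<in> o(t))}"

end

theory Submission
  imports Defs
begin


definition st :: "'a config \<Rightarrow> nat" where "st c = fst c"
definition tp :: "'a config \<Rightarrow> int \<Rightarrow> 'a + nat" where "tp c = fst (snd c)"
definition hp :: "'a config \<Rightarrow> int" where "hp c = snd (snd c)"

lemma stph_simps[simp]: "st (q,t,h) = q" "tp (q,t,h) = t" "hp (q,t,h) = h"
  by (simp_all add: st_def tp_def hp_def)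

lemma step_simp:
  "tm_step (Q,\<Gamma>,\<delta>,q0,qa,qr) (q,t,h) = (if q = qa \<or> q = qr then (q,t,h) else
     (fst (\<delta> q (t h)), t(h := fst (snd (\<delta> q (t h)))), h + snd (snd (\<delta> q (t h)))))"
  by (simp add: tm_step_def split: prod.split)

definition isrun :: "'a tm \<Rightarrow> (nat \<Rightarrow> 'a config) \<Rightarrow> bool" where
  "isrun M r \<longleftrightarrow> (\<forall>t. r (Suc t) = tm_step M (r t))"

lemma isrun_tm_run: "isrun M (tm_run M w)"
  by (simp add: isrun_def tm_run_def)

lemma halt_step:
  assumes "M = (Q,\<Gamma>,\<delta>,q0,qa,qr)" "st c = qa \<or> st c = qr"
  shows "tm_step M c = c"
  using assms by (cases c) (auto simp: step_simp)

lemma halt_persist: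
  assumes "M = (Q,\<Gamma>,\<delta>,q0,qa,qr)" "isrun M r" "st (r T) = qa \<or> st (r T) = qr" "T \<le> t"
  shows "r t = r T"
  using assms(4)
proof (induction t rule: dec_induct)
  case base then show ?case by simp
next
  case (step n)
  then show ?case using assms(2,3) halt_step[OF assms(1)] unfolding isrun_def by metis
qed

lemma step_agree:
  assumes "M = (Q,\<Gamma>,\<delta>,q0,qa,qr)" "st c = st c'" "hp c = hp c'" "tp c (hp c) = tp c' (hp c)"
  shows "st (tm_step M c) = st (tm_step M c') \<and> hp (tm_step M c) = hp (tm_step M c') \<and>
    (\<exists>v. tp (tm_step M c) = (tp c)(hp c := v) \<and> tp (tm_step M c') = (tp c')(hp c := v))"
proof -
  obtain q t h where c: "c = (q,t,h)" by (cases c)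
  obtain q' t' h' where c': "c' = (q',t',h')" by (cases c')
  show ?thesis using assms c c'
    apply (auto simp: step_simp)
    apply (metis fun_upd_triv)+
    done
qed

lemma step_tape_other:
  assumes "M = (Q,\<Gamma>,\<delta>,q0,qa,qr)" "x \<noteq> hp c"
  shows "tp (tm_step M c) x = tp c x"
  using step_agree[OF assms(1), of c c] assms(2) by auto

lemma reach_inv:
  assumes "M = (Q,\<Gamma>,\<delta>,q0,qa,qr)" "wf_tm \<Sigma> M" "w \<in> lists \<Sigma>"
  shows "st (tm_run M w t) \<in> Q \<and> (\<forall>i. tp (tm_run M w t) i \<in> \<Gamma>)"
proof (induction t)
  case 0
  have "w ! nat i \<in> \<Sigma>" if "0 \<le> i \<and> nat i < length w" for i
    using assms(3) that by (meson in_listsD nth_mem)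
  then show ?case using assms by (auto simp: tm_run_def initial_config_def wf_tm_def)
next
  case (Suc t)
  obtain q tt h where c: "tm_run M w t = (q,tt,h)" by (cases "tm_run M w t")
  have q: "q \<in> Q" and g: "\<And>i. tt i \<in> \<Gamma>" using Suc c by auto
  have "case \<delta> q (tt h) of (q', c', d) \<Rightarrow> q' \<in> Q \<and> c' \<in> \<Gamma> \<and> d \<in> {-1, 0, 1}"
    using assms(1,2) q g by (auto simp: wf_tm_def)
  then show ?case using c q g assms(1)
    by (auto simp: tm_run_def step_simp split: prod.splits)
qed

lemma move_bound:
  assumes "M = (Q,\<Gamma>,\<delta>,q0,qa,qr)" "wf_tm \<Sigma> M" "w \<in> lists \<Sigma>"
  shows "\<bar>hp (tm_run M w (Suc t)) - hp (tm_run M w t)\<bar> \<le> 1"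
proof -
  obtain q tt h where c: "tm_run M w t = (q,tt,h)" by (cases "tm_run M w t")
  have q: "q \<in> Q" and g: "\<And>i. tt i \<in> \<Gamma>" using reach_inv[OF assms, of t] c by auto
  have "case \<delta> q (tt h) of (q', c', d) \<Rightarrow> q' \<in> Q \<and> c' \<in> \<Gamma> \<and> d \<in> {-1, 0, 1}"
    using assms(1,2) q g by (auto simp: wf_tm_def)
  then show ?thesis using c assms(1)
    by (auto simp: tm_run_def step_simp split: prod.splits)
qed

definition cross :: "int \<Rightarrow> (nat \<Rightarrow> 'a config) \<Rightarrow> nat \<Rightarrow> bool" where
  "cross b r t \<longleftrightarrow> (hp (r t) < b) \<noteq> (hp (r (Suc t)) < b)"

fun ncross :: "int \<Rightarrow> (nat \<Rightarrow> 'a config) \<Rightarrow> nat \<Rightarrow> nat" where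
  "ncross b r 0 = 0"
| "ncross b r (Suc t) = ncross b r t + (if cross b r t then 1 else 0)"

definition cseq :: "int \<Rightarrow> (nat \<Rightarrow> 'a config) \<Rightarrow> nat \<Rightarrow> nat list" where
  "cseq b r T = map (\<lambda>t. st (r (Suc t))) (filter (cross b r) [0..<T])"

lemma length_cseq: "length (cseq b r T) = ncross b r T"
  by (induction T) (auto simp: cseq_def)

lemma ncross_mono: "t \<le> t' \<Longrightarrow> ncross b r t \<le> ncross b r t'"
  by (induction t' rule: dec_induct) auto

lemma ncross_cross_less: "cross b r t \<Longrightarrow> t < T \<Longrightarrow> ncross b r t < ncross b r T"
  using ncross_mono[of "Suc t" T b r] by auto

lemma cseq_nth: "cross b r t \<Longrightarrow> t < T \<Longrightarrow> cseq b r T ! ncross b r t = st (r (Suc t))"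
proof (induction T)
  case 0 then show ?case by simp
next
  case (Suc T)
  have eq: "cseq b r (Suc T) = cseq b r T @ (if cross b r T then [st (r (Suc T))] else [])"
    by (simp add: cseq_def)
  show ?case
  proof (cases "t < T")
    case True
    then have "ncross b r t < length (cseq b r T)"
      using Suc.prems ncross_cross_less length_cseq by metis
    then show ?thesis using Suc True eq by (simp add: nth_append)
  next
    case False
    then have "t = T" using Suc.prems by simp
    then show ?thesis using Suc.prems eq length_cseq[of b r T] by (simp add: nth_append)
  qed
qed

lemma ncross_exists: "j < ncross b r T \<Longrightarrow> \<exists>t<T. cross b r t \<and> ncross b r t = j"
proof (induction T)
  case 0 then show ?case by simp
next
  case (Suc T)
  show ?case
  proof (cases "j < ncross b r T")
    case True then show ?thesis using Suc by (meson less_SucI)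
  next
    case False
    then have "cross b r T" "j = ncross b r T" using Suc.prems by (auto split: if_splits)
    then show ?thesis by auto
  qed
qed

lemma side_parity: "(hp (r t) < b) = ((hp (r 0) < b) = even (ncross b r t))"
  by (induction t) (auto simp: cross_def)

lemma tape_unchanged:
  assumes "M = (Q,\<Gamma>,\<delta>,q0,qa,qr)" "isrun M r" "a \<le> c"
    "\<forall>t. a \<le> t \<and> t < c \<longrightarrow> P (hp (r t))" "\<not> P x"
  shows "tp (r c) x = tp (r a) x"
  using assms(3,4)
proof (induction c rule: dec_induct)
  case base then show ?case by simp
next
  case (step n)
  then have "x \<noteq> hp (r n)" using assms(5) by auto
  then show ?case using step step_tape_other[OF assms(1)] assms(2) unfolding isrun_def
    by (metis less_Suc_eq order.refl le_SucI)
qed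

lemma halted_no_cross:
  assumes "M = (Q,\<Gamma>,\<delta>,q0,qa,qr)" "isrun M r" "st (r t) = qa \<or> st (r t) = qr"
  shows "\<not> cross b r t"
  using assms halt_step[OF assms(1)] unfolding isrun_def cross_def by metis

lemma adj_cross:
  assumes "(\<forall>c. inn c = (c < b)) \<or> (\<forall>c. inn c = (\<not> c < (b::int)))"
    "inn h" "\<not> inn h'" "\<bar>h' - h\<bar> \<le> 1" "inn g" "\<not> inn g'" "\<bar>g' - g\<bar> \<le> 1"
  shows "h' = g'"
  using assms(1)
proof
  assume "\<forall>c. inn c = (c < b)" then show ?thesis using assms(2-7) by simp
next
  assume "\<forall>c. inn c = (\<not> c < b)" then show ?thesis using assms(2-7) by simp
qed

lemma phase:
  assumes M: "M = (Q,\<Gamma>,\<delta>,q0,qa,qr)"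
    and runs: "isrun M r" "isrun M ra" "isrun M ri"
    and mv: "\<forall>t. \<bar>hp (r (Suc t)) - hp (r t)\<bar> \<le> 1" "\<forall>t. \<bar>hp (ri (Suc t)) - hp (ri t)\<bar> \<le> 1"
    and h0: "hp (r 0) = hp (ri 0)"
    and inb: "(\<forall>c. inn c = (c < b)) \<or> (\<forall>c. inn c = (\<not> c < b))"
    and acca: "st (ra Ta) = qa"
    and ncT: "ncross b ra Ta = ncross b ri Ti"
    and csq: "\<forall>ia ii. ia < Ta \<longrightarrow> ii < Ti \<longrightarrow> cross b ra ia \<longrightarrow> cross b ri ii \<longrightarrow>
                 ncross b ra ia = ncross b ri ii \<longrightarrow> st (ra (Suc ia)) = st (ri (Suc ii))"
    and inv: "ncross b r k = ncross b ra ka" "ncross b r k = ncross b ri ki" "k \<le> ka + ki"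
      "\<forall>c. inn c \<longrightarrow> tp (r k) c = tp (ra ka) c" "\<forall>c. \<not> inn c \<longrightarrow> tp (r k) c = tp (ri ki) c"
      "inn (hp (r k))" "st (r k) = st (ra ka)" "hp (r k) = hp (ra ka)" "ki \<le> Ti"
  shows "\<exists>ka' ki'. ncross b r (Suc k) = ncross b ra ka' \<and> ncross b r (Suc k) = ncross b ri ki'
     \<and> Suc k \<le> ka' + ki' \<and> (\<forall>c. inn c \<longrightarrow> tp (r (Suc k)) c = tp (ra ka') c)
     \<and> (\<forall>c. \<not> inn c \<longrightarrow> tp (r (Suc k)) c = tp (ri ki') c)
     \<and> (if inn (hp (r (Suc k))) then st (r (Suc k)) = st (ra ka') \<and> hp (r (Suc k)) = hp (ra ka') \<and> ki' \<le> Ti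
        else st (r (Suc k)) = st (ri ki') \<and> hp (r (Suc k)) = hp (ri ki') \<and> ka' \<le> Ta)"
proof -
  have crossI: "\<And>x t. cross b x t \<longleftrightarrow> (inn (hp (x t)) \<noteq> inn (hp (x (Suc t))))"
    using inb by (auto simp: cross_def)
  have sideI: "\<And>x t. inn (hp (x t)) = (inn (hp (x 0)) = even (ncross b x t))"
    using inb side_parity by metis
  have rS: "r (Suc k) = tm_step M (r k)" "ra (Suc ka) = tm_step M (ra ka)"
    using runs unfolding isrun_def by auto
  have "tp (r k) (hp (r k)) = tp (ra ka) (hp (r k))" using inv(4,6) by auto
  from step_agree[OF M inv(7) inv(8) this]
  obtain v where sa: "st (r (Suc k)) = st (ra (Suc ka))" "hp (r (Suc k)) = hp (ra (Suc ka))"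
      "tp (r (Suc k)) = (tp (r k))(hp (r k) := v)" "tp (ra (Suc ka)) = (tp (ra ka))(hp (r k) := v)"
    using rS inv(8) by metis
  have tA: "\<forall>c. inn c \<longrightarrow> tp (r (Suc k)) c = tp (ra (Suc ka)) c" using sa inv(4) by auto
  have tI: "\<forall>c. \<not> inn c \<longrightarrow> tp (r (Suc k)) c = tp (ri ki) c" using sa inv(5,6) by auto
  show ?thesis
  proof (cases "inn (hp (r (Suc k)))")
    case True
    then have "\<not> cross b r k" "\<not> cross b ra ka" using crossI[of r k] crossI[of ra ka] inv(6,8) sa(2) by simp_all
    then have "ncross b r (Suc k) = ncross b ra (Suc ka)" "ncross b r (Suc k) = ncross b ri ki"
      using inv(1,2) by auto
    then show ?thesis using True tA tI sa inv(3,9)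
      by (intro exI[of _ "Suc ka"] exI[of _ ki]) auto
  next
    case False
    have cr: "cross b r k" "cross b ra ka" using False crossI[of r k] crossI[of ra ka] inv(6,8) sa(2) by simp_all
    have kaT: "ka < Ta"
    proof (rule ccontr)
      assume "\<not> ka < Ta"
      then have "ra ka = ra Ta" using halt_persist[OF M runs(2), of Ta ka] acca by simp
      then have "st (r k) = qa" using inv(7) acca by simp
      then show False using halted_no_cross[OF M runs(1)] cr by auto
    qed
    define j where "j = ncross b r k"
    have "j < ncross b ri Ti" using ncross_cross_less[OF cr(2) kaT] inv(1) ncT j_def by simp
    then obtain i2 where i2: "i2 < Ti" "cross b ri i2" "ncross b ri i2 = j"
      using ncross_exists by blast
    have ki: "ki \<le> i2"
    proof (rule ccontr)
      assume "\<not> ki \<le> i2"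
      then have "ncross b ri (Suc i2) \<le> ncross b ri ki" by (intro ncross_mono) simp
      then show False using i2 inv(2) j_def by simp
    qed
    have on: "\<forall>t. ki \<le> t \<and> t < Suc i2 \<longrightarrow> inn (hp (ri t))"
    proof (intro allI impI)
      fix t assume t: "ki \<le> t \<and> t < Suc i2"
      have "ncross b ri ki \<le> ncross b ri t" "ncross b ri t \<le> ncross b ri i2"
        using t by (auto intro: ncross_mono)
      then have "ncross b ri t = j" using i2 inv(2) j_def by simp
      then show "inn (hp (ri t))" using sideI[of ri t] sideI[of r k] inv(6) h0 j_def by simp
    qed
    have tI2: "\<forall>c. \<not> inn c \<longrightarrow> tp (ri (Suc i2)) c = tp (ri ki) c"
      using tape_unchanged[OF M runs(3), of ki "Suc i2" inn] ki on by auto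
    have in2a: "inn (hp (ri i2))" using on ki by simp
    have in2: "inn (hp (ri i2))" "\<not> inn (hp (ri (Suc i2)))" using in2a i2(2) crossI[of ri i2] by simp_all
    have hh: "hp (ri (Suc i2)) = hp (r (Suc k))"
      using adj_cross[OF inb in2 _ inv(6) False] mv(1)[rule_format, of k] mv(2)[rule_format, of i2] by simp
    have ss: "st (ra (Suc ka)) = st (ri (Suc i2))"
      using csq[rule_format, OF kaT i2(1) cr(2) i2(2)] inv(1) i2(3) j_def by simp
    have nc: "ncross b r (Suc k) = ncross b ra (Suc ka)" "ncross b r (Suc k) = ncross b ri (Suc i2)"
      using cr i2 inv(1) j_def by auto
    show ?thesis using False nc tA tI tI2 hh ss sa kaT ki inv(3)
      by (intro exI[of _ "Suc ka"] exI[of _ "Suc i2"]) auto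
  qed
qed


lemma tape0:
  assumes "M = (Q,\<Gamma>,\<delta>,q0,qa,qr)" "length x1 = length x2" "b = int (length x1)"
  shows "\<forall>c. c < b \<longrightarrow> tp (tm_run M (x1@y2) 0) c = tp (tm_run M (x1@y1) 0) c"
    "\<forall>c. \<not> c < b \<longrightarrow> tp (tm_run M (x1@y2) 0) c = tp (tm_run M (x2@y2) 0) c"
  using assms by (auto simp: tm_run_def initial_config_def nth_append)

lemma cut_paste:
  assumes M: "M = (Q,\<Gamma>,\<delta>,q0,qa,qr)" and wf: "wf_tm \<Sigma> M"
    and w: "x1 \<in> lists \<Sigma>" "y1 \<in> lists \<Sigma>" "x2 \<in> lists \<Sigma>" "y2 \<in> lists \<Sigma>"
    and len: "length x1 = length x2" and b: "b = int (length x1)"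
    and acc1: "st (tm_run M (x1@y1) T1) = qa" and acc2: "st (tm_run M (x2@y2) T2) = qa"
    and cs: "cseq b (tm_run M (x1@y1)) T1 = cseq b (tm_run M (x2@y2)) T2"
  shows "st (tm_run M (x1@y2) (T1+T2)) = qa"
proof -
  define r1 where "r1 = tm_run M (x1@y1)"
  define r2 where "r2 = tm_run M (x2@y2)"
  define r where "r = tm_run M (x1@y2)"
  have runs: "isrun M r" "isrun M r1" "isrun M r2"
    unfolding r_def r1_def r2_def by (simp_all add: isrun_tm_run)
  have mv: "\<forall>t. \<bar>hp (r (Suc t)) - hp (r t)\<bar> \<le> 1" "\<forall>t. \<bar>hp (r1 (Suc t)) - hp (r1 t)\<bar> \<le> 1"
      "\<forall>t. \<bar>hp (r2 (Suc t)) - hp (r2 t)\<bar> \<le> 1"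
    unfolding r_def r1_def r2_def using move_bound[OF M wf] w by auto
  have h0: "hp (r 0) = 0" "hp (r1 0) = 0" "hp (r2 0) = 0" "st (r 0) = q0" "st (r1 0) = q0" "st (r2 0) = q0"
    unfolding r_def r1_def r2_def by (simp_all add: M tm_run_def initial_config_def)
  have ncT: "ncross b r1 T1 = ncross b r2 T2"
    using cs length_cseq unfolding r1_def r2_def by metis
  have csq12: "\<forall>ia ii. ia < T1 \<longrightarrow> ii < T2 \<longrightarrow> cross b r1 ia \<longrightarrow> cross b r2 ii \<longrightarrow>
                 ncross b r1 ia = ncross b r2 ii \<longrightarrow> st (r1 (Suc ia)) = st (r2 (Suc ii))"
  proof (intro allI impI)
    fix ia ii assume a: "ia < T1" "ii < T2" "cross b r1 ia" "cross b r2 ii" "ncross b r1 ia = ncross b r2 ii"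
    have "st (r1 (Suc ia)) = cseq b r1 T1 ! ncross b r1 ia" using cseq_nth a by metis
    also have "\<dots> = cseq b r2 T2 ! ncross b r2 ii" using cs a(5) r1_def r2_def by simp
    also have "\<dots> = st (r2 (Suc ii))" using cseq_nth a by metis
    finally show "st (r1 (Suc ia)) = st (r2 (Suc ii))" .
  qed
  have csq21: "\<forall>ia ii. ia < T2 \<longrightarrow> ii < T1 \<longrightarrow> cross b r2 ia \<longrightarrow> cross b r1 ii \<longrightarrow>
                 ncross b r2 ia = ncross b r1 ii \<longrightarrow> st (r2 (Suc ia)) = st (r1 (Suc ii))"
    using csq12 by metis
  have t0: "\<forall>c. c < b \<longrightarrow> tp (r 0) c = tp (r1 0) c" "\<forall>c. \<not> c < b \<longrightarrow> tp (r 0) c = tp (r2 0) c"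
    unfolding r_def r1_def r2_def using tape0[OF M len b] by auto
  have acc1': "st (r1 T1) = qa" and acc2': "st (r2 T2) = qa" using acc1 acc2 r1_def r2_def by simp_all
  define Q where "Q k k1 k2 \<longleftrightarrow> (ncross b r k = ncross b r1 k1 \<and> ncross b r k = ncross b r2 k2
     \<and> k \<le> k1 + k2 \<and> (\<forall>c. c < b \<longrightarrow> tp (r k) c = tp (r1 k1) c)
     \<and> (\<forall>c. \<not> c < b \<longrightarrow> tp (r k) c = tp (r2 k2) c)
     \<and> (if hp (r k) < b then st (r k) = st (r1 k1) \<and> hp (r k) = hp (r1 k1) \<and> k2 \<le> T2
        else st (r k) = st (r2 k2) \<and> hp (r k) = hp (r2 k2) \<and> k1 \<le> T1))" for k k1 k2
  have "\<exists>k1 k2. Q k k1 k2" for k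
  proof (induction k)
    case 0
    have "Q 0 0 0" unfolding Q_def using h0 t0 by auto
    then show ?case by blast
  next
    case (Suc k)
    then obtain k1 k2 where Qk: "Q k k1 k2" by blast
    note I = Qk[unfolded Q_def]
    show ?case
    proof (cases "hp (r k) < b")
      case True
      have "\<exists>ka' ki'. ncross b r (Suc k) = ncross b r1 ka' \<and> ncross b r (Suc k) = ncross b r2 ki'
     \<and> Suc k \<le> ka' + ki' \<and> (\<forall>c. c < b \<longrightarrow> tp (r (Suc k)) c = tp (r1 ka') c)
     \<and> (\<forall>c. \<not> c < b \<longrightarrow> tp (r (Suc k)) c = tp (r2 ki') c)
     \<and> (if hp (r (Suc k)) < b then st (r (Suc k)) = st (r1 ka') \<and> hp (r (Suc k)) = hp (r1 ka') \<and> ki' \<le> T2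
        else st (r (Suc k)) = st (r2 ki') \<and> hp (r (Suc k)) = hp (r2 ki') \<and> ka' \<le> T1)"
        apply (rule phase[OF M runs(1,2,3) mv(1,3), of "\<lambda>c. c < b" b T1 T2 k k1 k2])
        using h0 acc1' ncT csq12 I True by simp_all
      then obtain ka' ki' where R: "ncross b r (Suc k) = ncross b r1 ka' \<and> ncross b r (Suc k) = ncross b r2 ki'
     \<and> Suc k \<le> ka' + ki' \<and> (\<forall>c. c < b \<longrightarrow> tp (r (Suc k)) c = tp (r1 ka') c)
     \<and> (\<forall>c. \<not> c < b \<longrightarrow> tp (r (Suc k)) c = tp (r2 ki') c)
     \<and> (if hp (r (Suc k)) < b then st (r (Suc k)) = st (r1 ka') \<and> hp (r (Suc k)) = hp (r1 ka') \<and> ki' \<le> T2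
        else st (r (Suc k)) = st (r2 ki') \<and> hp (r (Suc k)) = hp (r2 ki') \<and> ka' \<le> T1)" by (elim exE)
      have "Q (Suc k) ka' ki'" unfolding Q_def by (rule R)
      then show ?thesis by blast
    next
      case False
      have "\<exists>ka' ki'. ncross b r (Suc k) = ncross b r2 ka' \<and> ncross b r (Suc k) = ncross b r1 ki'
     \<and> Suc k \<le> ka' + ki' \<and> (\<forall>c. \<not> c < b \<longrightarrow> tp (r (Suc k)) c = tp (r2 ka') c)
     \<and> (\<forall>c. \<not> \<not> c < b \<longrightarrow> tp (r (Suc k)) c = tp (r1 ki') c)
     \<and> (if \<not> hp (r (Suc k)) < b then st (r (Suc k)) = st (r2 ka') \<and> hp (r (Suc k)) = hp (r2 ka') \<and> ki' \<le> T1
        else st (r (Suc k)) = st (r1 ki') \<and> hp (r (Suc k)) = hp (r1 ki') \<and> ka' \<le> T2)"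
        apply (rule phase[OF M runs(1,3,2) mv(1,2), of "\<lambda>c. \<not> c < b" b T2 T1 k k2 k1])
        using h0 acc2' ncT csq21 I False by simp_all
      then obtain ka' ki' where R: "ncross b r (Suc k) = ncross b r2 ka' \<and> ncross b r (Suc k) = ncross b r1 ki'
     \<and> Suc k \<le> ka' + ki' \<and> (\<forall>c. \<not> c < b \<longrightarrow> tp (r (Suc k)) c = tp (r2 ka') c)
     \<and> (\<forall>c. \<not> \<not> c < b \<longrightarrow> tp (r (Suc k)) c = tp (r1 ki') c)
     \<and> (if \<not> hp (r (Suc k)) < b then st (r (Suc k)) = st (r2 ka') \<and> hp (r (Suc k)) = hp (r2 ka') \<and> ki' \<le> T1
        else st (r (Suc k)) = st (r1 ki') \<and> hp (r (Suc k)) = hp (r1 ki') \<and> ka' \<le> T2)" by (elim exE)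
      have "Q (Suc k) ki' ka'" unfolding Q_def
        using R by (cases "hp (r (Suc k)) < b") (simp_all add: add.commute)
      then show ?thesis by blast
    qed
  qed
  then obtain k1 k2 where QT: "Q (T1+T2) k1 k2" by blast
  have I: "T1 + T2 \<le> k1 + k2"
      "if hp (r (T1+T2)) < b then st (r (T1+T2)) = st (r1 k1) \<and> k2 \<le> T2
        else st (r (T1+T2)) = st (r2 k2) \<and> k1 \<le> T1"
    using QT unfolding Q_def by (simp_all split: if_splits)
  show ?thesis
  proof (cases "hp (r (T1+T2)) < b")
    case True
    then have "T1 \<le> k1" "st (r (T1+T2)) = st (r1 k1)" using I by auto
    then have "r1 k1 = r1 T1" using halt_persist[OF M runs(2), of T1 k1] acc1 r1_def by simp
    then show ?thesis using \<open>st (r (T1+T2)) = st (r1 k1)\<close> acc1 r_def r1_def by simp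
  next
    case False
    then have "T2 \<le> k2" "st (r (T1+T2)) = st (r2 k2)" using I by auto
    then have "r2 k2 = r2 T2" using halt_persist[OF M runs(3), of T2 k2] acc2 r2_def by simp
    then show ?thesis using \<open>st (r (T1+T2)) = st (r2 k2)\<close> acc2 r_def r2_def by simp
  qed
qed





lemma cross_max:
  assumes "cross b r t" "\<bar>hp (r (Suc t)) - hp (r t)\<bar> \<le> 1"
  shows "b = max (hp (r t)) (hp (r (Suc t)))"
  using assms unfolding cross_def by auto

lemma sum_ncross_le:
  assumes "inj_on f I" "finite I" "\<forall>t. \<bar>hp (r (Suc t)) - hp (r t)\<bar> \<le> 1"
  shows "(\<Sum>i\<in>I. ncross (f i) r T) \<le> T"
proof (induction T)
  case 0 then show ?case by simp
next
  case (Suc T)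
  have c1: "card {i\<in>I. cross (f i) r T} \<le> Suc 0"
  proof -
    have "\<forall>a1\<in>{i\<in>I. cross (f i) r T}. \<forall>a2\<in>{i\<in>I. cross (f i) r T}. a1 = a2"
    proof (intro ballI)
      fix a1 a2 assume a: "a1 \<in> {i\<in>I. cross (f i) r T}" "a2 \<in> {i\<in>I. cross (f i) r T}"
      have "f a1 = max (hp (r T)) (hp (r (Suc T)))" using a(1) cross_max[of "f a1" r T] assms(3) by simp
      moreover have "f a2 = max (hp (r T)) (hp (r (Suc T)))" using a(2) cross_max[of "f a2" r T] assms(3) by simp
      ultimately have "f a1 = f a2" by simp
      then show "a1 = a2" using assms(1) a by (auto dest: inj_onD)
    qed
    moreover have "finite {i\<in>I. cross (f i) r T}" using assms(2) by simp
    ultimately show ?thesis using card_le_Suc0_iff_eq by blast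
  qed
  have "(\<Sum>i\<in>I. ncross (f i) r (Suc T)) = (\<Sum>i\<in>I. ncross (f i) r T) + (\<Sum>i\<in>I. if cross (f i) r T then 1 else 0)"
    by (simp add: sum.distrib)
  also have "(\<Sum>i\<in>I. if cross (f i) r T then 1 else 0) = card {i\<in>I. cross (f i) r T}"
    using sum.inter_filter[OF assms(2), of "\<lambda>_. 1::nat" "\<lambda>i. cross (f i) r T"] by simp
  finally show ?case using Suc c1 by linarith
qed



lemma card_short_lists:
  assumes "finite Q" "Q \<noteq> {}"
  shows "card {xs. set xs \<subseteq> Q \<and> length xs < L} \<le> (card Q + 1) ^ L"
proof (induction L)
  case 0 then show ?case by simp
next
  case (Suc L)
  have eq: "{xs. set xs \<subseteq> Q \<and> length xs < Suc L} = {xs. set xs \<subseteq> Q \<and> length xs < L} \<union> {xs. set xs \<subseteq> Q \<and> length xs = L}"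
    by auto
  have fin: "finite {xs. set xs \<subseteq> Q \<and> length xs < L}"
    using finite_lists_length_le[OF assms(1), of L] by (rule finite_subset[rotated]) auto
  have q: "card Q \<ge> 1" using assms by (simp add: Suc_leI card_gt_0_iff)
  have a1: "card {xs. set xs \<subseteq> Q \<and> length xs < Suc L} \<le> card {xs. set xs \<subseteq> Q \<and> length xs < L} + card {xs. set xs \<subseteq> Q \<and> length xs = L}"
    unfolding eq by (rule card_Un_le)
  have a2: "card {xs. set xs \<subseteq> Q \<and> length xs = L} = card Q ^ L"
    by (rule card_lists_length_eq[OF assms(1)])
  have a3: "card Q ^ L \<le> (card Q + 1) ^ L" by (rule power_mono) simp_all
  have a4: "card {xs. set xs \<subseteq> Q \<and> length xs < L} \<le> (card Q + 1) ^ L" by (rule Suc.IH)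
  have a5: "(card Q + 1) ^ L + (card Q + 1) ^ L \<le> (card Q + 1) ^ Suc L"
  proof -
    have "2 * (card Q + 1) ^ L \<le> (card Q + 1) * (card Q + 1) ^ L"
      using q by (intro mult_le_mono1) simp
    then show ?thesis by simp
  qed
  show ?case using a1 a2 a3 a4 a5 by linarith
qed




lemma eval_word_Nil[simp]: "eval_word G [] = \<one>\<^bsub>G\<^esub>"
  and eval_word_Cons[simp]: "eval_word G (s # w) = s \<otimes>\<^bsub>G\<^esub> eval_word G w"
  by (simp_all add: eval_word_def)

lemma eval_word_closed:
  assumes "group G" shows "set w \<subseteq> carrier G \<Longrightarrow> eval_word G w \<in> carrier G"
proof (induction w)
  case Nil
  interpret G: group G by fact
  show ?case by simp
next
  case (Cons a w)
  interpret G: group G by fact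
  show ?case using Cons by simp
qed

lemma eval_word_append:
  assumes "group G" "set u \<subseteq> carrier G" "set v \<subseteq> carrier G"
  shows "eval_word G (u @ v) = eval_word G u \<otimes>\<^bsub>G\<^esub> eval_word G v"
  using assms(2)
proof (induction u)
  case Nil
  interpret G: group G by fact
  show ?case using eval_word_closed[OF assms(1) assms(3)] by simp
next
  case (Cons s u)
  interpret G: group G by fact
  have c: "s \<in> carrier G" "eval_word G u \<in> carrier G" "eval_word G v \<in> carrier G"
    using Cons.prems eval_word_closed[OF assms(1)] assms(3) by auto
  have "eval_word G ((s # u) @ v) = s \<otimes>\<^bsub>G\<^esub> (eval_word G u \<otimes>\<^bsub>G\<^esub> eval_word G v)"
    using Cons by simp
  also have "\<dots> = (s \<otimes>\<^bsub>G\<^esub> eval_word G u) \<otimes>\<^bsub>G\<^esub> eval_word G v"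
    using c by (simp add: G.m_assoc)
  finally show ?case by simp
qed

definition inv_word :: "('a, 'b) monoid_scheme \<Rightarrow> 'a list \<Rightarrow> 'a list" where
  "inv_word G u = rev (map (m_inv G) u)"

lemma inv_word_lists: "\<forall>s\<in>S. inv\<^bsub>G\<^esub> s \<in> S \<Longrightarrow> u \<in> lists S \<Longrightarrow> inv_word G u \<in> lists S"
  by (auto simp: inv_word_def)

lemma eval_inv_word:
  assumes "group G" "set u \<subseteq> carrier G"
  shows "eval_word G (inv_word G u) = inv\<^bsub>G\<^esub> (eval_word G u)"
  using assms(2)
proof (induction u)
  case Nil
  interpret G: group G by fact
  show ?case by (simp add: inv_word_def)
next
  case (Cons s u)
  interpret G: group G by fact
  have su: "s \<in> carrier G" "set u \<subseteq> carrier G" using Cons.prems by auto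
  have cl: "set (inv_word G u) \<subseteq> carrier G" using su by (auto simp: inv_word_def)
  have ce: "eval_word G u \<in> carrier G" using eval_word_closed[OF assms(1) su(2)] .
  have "eval_word G (inv_word G (s # u)) = eval_word G (inv_word G u @ [inv\<^bsub>G\<^esub> s])"
    by (simp add: inv_word_def)
  also have "\<dots> = eval_word G (inv_word G u) \<otimes>\<^bsub>G\<^esub> eval_word G [inv\<^bsub>G\<^esub> s]"
    using eval_word_append[OF assms(1) cl, of "[inv\<^bsub>G\<^esub> s]"] su by simp
  also have "\<dots> = inv\<^bsub>G\<^esub> (eval_word G u) \<otimes>\<^bsub>G\<^esub> inv\<^bsub>G\<^esub> s"
    using Cons.IH su by simp
  also have "\<dots> = inv\<^bsub>G\<^esub> (s \<otimes>\<^bsub>G\<^esub> eval_word G u)"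
    using G.inv_mult_group[OF su(1) ce] by simp
  finally show ?case by simp
qed

lemma wp_iff:
  assumes "group G" "u \<in> lists S" "v \<in> lists S" "P \<in> lists S" "S \<subseteq> carrier G"
    "\<forall>s\<in>S. inv\<^bsub>G\<^esub> s \<in> S" "eval_word G P = \<one>\<^bsub>G\<^esub>"
  shows "u @ P @ inv_word G v \<in> word_problem G S \<longleftrightarrow> eval_word G u = eval_word G v"
proof -
  interpret G: group G by fact
  have c: "set u \<subseteq> carrier G" "set v \<subseteq> carrier G" "set P \<subseteq> carrier G"
    "set (inv_word G v) \<subseteq> carrier G" using assms inv_word_lists[OF assms(6,3)] by auto
  have ev: "eval_word G u \<in> carrier G" "eval_word G v \<in> carrier G"
    using eval_word_closed[OF assms(1)] c by auto
  have "eval_word G (u @ P @ inv_word G v) = eval_word G u \<otimes>\<^bsub>G\<^esub> (eval_word G P \<otimes>\<^bsub>G\<^esub> eval_word G (inv_word G v))"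
    using eval_word_append[OF assms(1)] c by simp
  also have "\<dots> = eval_word G u \<otimes>\<^bsub>G\<^esub> inv\<^bsub>G\<^esub> eval_word G v"
    using eval_inv_word[OF assms(1) c(2)] assms(7) ev by simp
  finally have e: "eval_word G (u @ P @ inv_word G v) = eval_word G u \<otimes>\<^bsub>G\<^esub> inv\<^bsub>G\<^esub> eval_word G v" .
  have l: "u @ P @ inv_word G v \<in> lists S" using inv_word_lists[OF assms(6,3)] assms(2,4) by auto
  have "eval_word G u \<otimes>\<^bsub>G\<^esub> inv\<^bsub>G\<^esub> eval_word G v = \<one>\<^bsub>G\<^esub> \<longleftrightarrow> eval_word G u = eval_word G v"
  proof
    assume h: "eval_word G u \<otimes>\<^bsub>G\<^esub> inv\<^bsub>G\<^esub> eval_word G v = \<one>\<^bsub>G\<^esub>"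
    have "eval_word G u = eval_word G u \<otimes>\<^bsub>G\<^esub> (inv\<^bsub>G\<^esub> eval_word G v \<otimes>\<^bsub>G\<^esub> eval_word G v)"
      using ev by simp
    also have "\<dots> = (eval_word G u \<otimes>\<^bsub>G\<^esub> inv\<^bsub>G\<^esub> eval_word G v) \<otimes>\<^bsub>G\<^esub> eval_word G v"
      using ev by (simp add: G.m_assoc)
    also have "\<dots> = eval_word G v" using h ev by simp
    finally show "eval_word G u = eval_word G v" .
  next
    assume "eval_word G u = eval_word G v"
    then show "eval_word G u \<otimes>\<^bsub>G\<^esub> inv\<^bsub>G\<^esub> eval_word G v = \<one>\<^bsub>G\<^esub>" using ev by simp
  qed
  then show ?thesis using e l unfolding word_problem_def by simp
qed





lemma time_lower:
  fixes G :: "('a, 'b) monoid_scheme"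
  assumes grp: "group G" and S: "S \<subseteq> carrier G" "\<forall>s\<in>S. inv\<^bsub>G\<^esub> s \<in> S"
    and M: "M = (Q,\<Gamma>,\<delta>,q0,qa,qr)" and dec: "decides_in_time S M (word_problem G S) T"
    and A: "finite A" "A \<subseteq> lists S" "\<forall>u\<in>A. length u = k" "inj_on (eval_word G) A"
    and P: "P \<in> lists S" "eval_word G P = \<one>\<^bsub>G\<^esub>"
  shows "(length P + 1) * (L * (card A - (card Q + 1) ^ L)) \<le> card A * T (2 * k + length P)"
proof -
  have wf: "wf_tm S M" using dec by (simp add: decides_in_time_def)
  have Qf: "finite Q" "Q \<noteq> {}" "qa \<noteq> qr" using wf M by (auto simp: wf_tm_def)
  have decw: "st (tm_run M w (T (length w))) = (if w \<in> word_problem G S then qa else qr)"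
    if "w \<in> lists S" for w
    using dec M that unfolding decides_in_time_def st_def by auto
  define l where "l = 2 * k + length P"
  define Tl where "Tl = T l"
  define w where "w u = u @ P @ inv_word G u" for u
  define cs where "cs i u = cseq (int (k + i)) (tm_run M (w u)) Tl" for i u
  have wl: "u @ P @ inv_word G v \<in> lists S \<and> length (u @ P @ inv_word G v) = l"
    if "u \<in> A" "v \<in> A" for u v
    using that A P inv_word_lists[OF S(2), of v] unfolding l_def by (auto simp: inv_word_def)
  have wacc: "st (tm_run M (u @ P @ inv_word G v) Tl) = (if u = v then qa else qr)"
    if "u \<in> A" "v \<in> A" for u v
  proof -
    have "u @ P @ inv_word G v \<in> word_problem G S \<longleftrightarrow> u = v"
      using wp_iff[OF grp _ _ P(1) S(1) S(2) P(2), of u v] that A inj_onD[OF A(4)] by blast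
    then show ?thesis using decw[of "u @ P @ inv_word G v"] wl[OF that] unfolding Tl_def by simp
  qed
  have inj: "inj_on (cs i) A" if i: "i \<le> length P" for i
  proof (rule inj_onI)
    fix u v assume uv: "u \<in> A" "v \<in> A" "cs i u = cs i v"
    show "u = v"
    proof (rule ccontr)
      assume ne: "u \<noteq> v"
      define x1 where "x1 = u @ take i P"
      define y1 where "y1 = drop i P @ inv_word G u"
      define x2 where "x2 = v @ take i P"
      define y2 where "y2 = drop i P @ inv_word G v"
      have e1: "x1 @ y1 = w u" "x2 @ y2 = w v" "x1 @ y2 = u @ P @ inv_word G v"
        unfolding x1_def y1_def x2_def y2_def w_def by simp_all
      have ls: "x1 \<in> lists S" "y1 \<in> lists S" "x2 \<in> lists S" "y2 \<in> lists S"
        using uv A P inv_word_lists[OF S(2), of u] inv_word_lists[OF S(2), of v]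
        unfolding x1_def y1_def x2_def y2_def
        by (auto dest: in_set_takeD in_set_dropD)
      have len: "length x1 = length x2" "int (k + i) = int (length x1)"
        using uv A i unfolding x1_def x2_def by auto
      have acc1: "st (tm_run M (x1 @ y1) Tl) = qa" using wacc[of u u] uv e1 unfolding w_def by simp
      have acc2: "st (tm_run M (x2 @ y2) Tl) = qa" using wacc[of v v] uv e1 unfolding w_def by simp
      have cseq: "cseq (int (length x1)) (tm_run M (x1 @ y1)) Tl = cseq (int (length x1)) (tm_run M (x2 @ y2)) Tl"
        using uv(3) e1 len unfolding cs_def by simp
      have "st (tm_run M (x1 @ y2) (Tl + Tl)) = qa"
        by (rule cut_paste[OF M wf ls len(1) refl acc1 acc2 cseq])
      moreover have "st (tm_run M (x1 @ y2) Tl) = qr" using wacc[of u v] uv ne e1 by simp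
      then have "tm_run M (x1 @ y2) (Tl + Tl) = tm_run M (x1 @ y2) Tl"
        using halt_persist[OF M isrun_tm_run, of "x1 @ y2" Tl "Tl + Tl"] by simp
      ultimately show False using Qf(3) \<open>st (tm_run M (x1 @ y2) Tl) = qr\<close> by simp
    qed
  qed
  have stQ: "set (cs i u) \<subseteq> Q" if "u \<in> A" for i u
  proof -
    have "w u \<in> lists S" using wl[OF that that] unfolding w_def by simp
    then show ?thesis using reach_inv[OF M wf] unfolding cs_def cseq_def by auto
  qed
  have sumle: "(\<Sum>i\<le>length P. length (cs i u)) \<le> Tl" if "u \<in> A" for u
  proof -
    have wu: "w u \<in> lists S" using wl[OF that that] unfolding w_def by simp
    have "(\<Sum>i\<le>length P. length (cs i u)) = (\<Sum>i\<le>length P. ncross (int (k + i)) (tm_run M (w u)) Tl)"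
      unfolding cs_def by (simp add: length_cseq)
    also have "\<dots> \<le> Tl"
      by (rule sum_ncross_le) (auto simp: inj_on_def move_bound[OF M wf wu])
    finally show ?thesis .
  qed
  have cnt: "L * (card A - (card Q + 1) ^ L) \<le> (\<Sum>u\<in>A. length (cs i u))" if i: "i \<le> length P" for i
  proof -
    define B where "B = {u\<in>A. length (cs i u) < L}"
    have BA: "B \<subseteq> A" "finite B" using A(1) unfolding B_def by auto
    have "card B = card (cs i ` B)"
      using inj_on_subset[OF inj[OF i] BA(1)] by (simp add: card_image)
    also have "\<dots> \<le> card {xs. set xs \<subseteq> Q \<and> length xs < L}"
    proof (rule card_mono)
      show "finite {xs. set xs \<subseteq> Q \<and> length xs < L}"
        using finite_lists_length_le[OF Qf(1), of L] by (rule finite_subset[rotated]) auto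
      show "cs i ` B \<subseteq> {xs. set xs \<subseteq> Q \<and> length xs < L}" using stQ unfolding B_def by auto
    qed
    also have "\<dots> \<le> (card Q + 1) ^ L" by (rule card_short_lists[OF Qf(1,2)])
    finally have cB: "card B \<le> (card Q + 1) ^ L" .
    have "L * (card A - (card Q + 1) ^ L) \<le> L * (card A - card B)"
      using cB by (intro mult_le_mono2 diff_le_mono2)
    also have "\<dots> = L * card (A - B)" using BA by (simp add: card_Diff_subset)
    also have "\<dots> = (\<Sum>u\<in>A - B. L)" by simp
    also have "\<dots> \<le> (\<Sum>u\<in>A - B. length (cs i u))"
      by (rule sum_mono) (auto simp: B_def)
    also have "\<dots> \<le> (\<Sum>u\<in>A. length (cs i u))"
      by (rule sum_mono2) (use A(1) in auto)
    finally show ?thesis .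
  qed
  have "(length P + 1) * (L * (card A - (card Q + 1) ^ L)) = (\<Sum>i\<le>length P. L * (card A - (card Q + 1) ^ L))"
    by simp
  also have "\<dots> \<le> (\<Sum>i\<le>length P. \<Sum>u\<in>A. length (cs i u))"
    by (rule sum_mono) (rule cnt, simp)
  also have "\<dots> = (\<Sum>u\<in>A. \<Sum>i\<le>length P. length (cs i u))"
    by (rule sum.swap)
  also have "\<dots> \<le> (\<Sum>u\<in>A. Tl)"
    by (rule sum_mono) (rule sumle)
  also have "\<dots> = card A * T (2 * k + length P)" unfolding Tl_def l_def by simp
  finally show ?thesis .
qed



lemma asymp_contra:
  fixes \<alpha> :: real and T :: "nat \<Rightarrow> nat" and C q :: nat
  assumes a: "0 < \<alpha>" and C: "C > 0" and q: "q \<ge> 1"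
    and o: "(\<lambda>n. real (T n)) \<in> o(\<lambda>n. real n powr (1 + \<alpha>))"
    and key: "\<And>n. n \<ge> 1 \<Longrightarrow> \<exists>l. 2 * (C * n) \<le> l + 2 \<and> l \<le> 4 * (C * n) \<and>
       (\<forall>L. real ((q + 1) ^ L) * 4 \<le> 2 powr (real n powr \<alpha>) \<longrightarrow> C * n * L \<le> T l)"
  shows False
proof -
  define lq where "lq = log 2 (real q + 1)"
  have lq: "lq > 0" using q unfolding lq_def by simp
  define eps where "eps = real C / (4 * lq * (4 * real C) powr (1 + \<alpha>))"
  have eps: "eps > 0" using C lq unfolding eps_def by simp
  have "eventually (\<lambda>x. norm (real (T x)) \<le> eps * norm (real x powr (1 + \<alpha>))) at_top"
    using landau_o.smallD[OF o eps] .
  then obtain N0 where N0: "\<And>x. x \<ge> N0 \<Longrightarrow> real (T x) \<le> eps * (real x powr (1 + \<alpha>))"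
    by (auto simp: eventually_at_top_linorder)
  define n where "n = nat \<lceil>max (real N0 + 2) ((4 + 2 * lq) powr (1 / \<alpha>))\<rceil>"
  have n1: "real n \<ge> real N0 + 2" and n2: "real n \<ge> (4 + 2 * lq) powr (1 / \<alpha>)"
    unfolding n_def by linarith+
  have nN: "n \<ge> N0 + 2" "n \<ge> 1" using n1 by linarith+
  have npos: "real n > 0" using nN by simp
  define y where "y = real n powr \<alpha>"
  have y: "y \<ge> 4 + 2 * lq"
  proof -
    have "((4 + 2 * lq) powr (1 / \<alpha>)) powr \<alpha> \<le> real n powr \<alpha>"
      using n2 a by (intro powr_mono2) auto
    moreover have "((4 + 2 * lq) powr (1 / \<alpha>)) powr \<alpha> = 4 + 2 * lq"
      using a lq by (simp add: powr_powr)
    ultimately show ?thesis unfolding y_def by simp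
  qed
  obtain l where l: "2 * (C * n) \<le> l + 2" "l \<le> 4 * (C * n)"
    and lk: "\<And>L. real ((q + 1) ^ L) * 4 \<le> 2 powr y \<Longrightarrow> C * n * L \<le> T l"
    using key[OF nN(2)] unfolding y_def by blast
  define L where "L = nat \<lfloor>(y - 2) / lq\<rfloor>"
  have Lr: "real L \<le> (y - 2) / lq" "real L \<ge> (y - 2) / lq - 1"
    using y lq unfolding L_def by (simp_all add: divide_nonneg_nonneg)
  have "real ((q + 1) ^ L) = (2 powr lq) ^ L"
    unfolding lq_def using q by (simp add: add.commute)
  also have "\<dots> = 2 powr (lq * real L)" by (simp add: powr_realpow[symmetric] powr_powr)
  also have "\<dots> \<le> 2 powr (y - 2)"
    using Lr(1) lq by (intro powr_mono) (auto simp: field_simps)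
  also have "\<dots> = 2 powr y / 4" by (simp add: powr_diff)
  finally have "real ((q + 1) ^ L) * 4 \<le> 2 powr y" by simp
  then have TL: "real C * real n * real L \<le> real (T l)" using lk by (metis of_nat_le_iff of_nat_mult)
  have "C * n \<ge> n" using C by simp
  then have lN: "l \<ge> N0" using l nN by linarith
  have Tub: "real (T l) \<le> eps * (real l powr (1 + \<alpha>))" using N0 lN by simp
  have "real l powr (1 + \<alpha>) \<le> (4 * real C * real n) powr (1 + \<alpha>)"
  proof -
    have "real l \<le> real (4 * (C * n))" using l(2) by (simp only: of_nat_le_iff)
    then have "real l \<le> 4 * real C * real n" by simp
    then show ?thesis using a by (intro powr_mono2) auto
  qed
  also have "\<dots> = (4 * real C) powr (1 + \<alpha>) * (real n * y)"
    using npos a unfolding y_def by (simp add: powr_mult powr_add)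
  finally have lpow: "real l powr (1 + \<alpha>) \<le> (4 * real C) powr (1 + \<alpha>) * (real n * y)" .
  have pc: "(4 * real C) powr (1 + \<alpha>) > 0" using C by simp
  have "eps * (real l powr (1 + \<alpha>)) \<le> eps * ((4 * real C) powr (1 + \<alpha>) * (real n * y))"
    using lpow eps by (intro mult_left_mono) auto
  also have "\<dots> = real C * (real n * y) / (4 * lq)"
    unfolding eps_def using pc lq by (simp add: field_simps)
  finally have up: "real C * real n * real L \<le> real C * (real n * y) / (4 * lq)"
    using TL Tub by linarith
  have Llow: "real L \<ge> y / (2 * lq)"
  proof -
    have "(y - 2) / lq - 1 \<ge> y / (2 * lq)" using y lq by (simp add: field_simps)
    then show ?thesis using Lr(2) by linarith
  qed
  have "real C * real n * (y / (2 * lq)) \<le> real C * real n * real L"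
    using Llow C npos by (intro mult_left_mono) auto
  also note up
  finally have "real C * real n * (y / (2 * lq)) \<le> real C * (real n * y) / (4 * lq)" .
  moreover have "real C * real n * y > 0" using C npos y lq by simp
  ultimately show False using lq by (simp add: field_simps)
qed


theorem mainTheorem5:
  fixes G :: "('a, 'b) monoid_scheme" and S :: "'a set" and \<alpha> :: real
  assumes "group G"
    and "fin_sym_gen_set G S"
    and "0 < \<alpha>" and "\<alpha> \<le> 1"
    and "dominates (\<lambda>n. real (growth G S n)) (\<lambda>n. 2 powr (real n powr \<alpha>))"
  shows "word_problem G S \<notin> DTIME1_o S (\<lambda>n. real n powr (1 + \<alpha>))"
proof
  assume "word_problem G S \<in> DTIME1_o S (\<lambda>n. real n powr (1 + \<alpha>))"
  then obtain M T where dec: "decides_in_time S M (word_problem G S) T"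
    and o: "(\<lambda>n. real (T n)) \<in> o(\<lambda>n. real n powr (1 + \<alpha>))"
    unfolding DTIME1_o_def by blast
  obtain Q \<Gamma> \<delta> q0 qa qr where M: "M = (Q,\<Gamma>,\<delta>,q0,qa,qr)" by (cases M) auto
  have wf: "wf_tm S M" using dec by (simp add: decides_in_time_def)
  have Qf: "finite Q" "Q \<noteq> {}" using wf M by (auto simp: wf_tm_def)
  then have q: "card Q \<ge> 1" by (simp add: Suc_leI card_gt_0_iff)
  have grp: "group G" by fact
  interpret G: group G by fact
  have S: "finite S" "S \<subseteq> carrier G" "\<forall>s\<in>S. inv\<^bsub>G\<^esub> s \<in> S"
    using assms(2) unfolding fin_sym_gen_set_def by auto
  obtain C where C: "C > 0" and dom: "\<And>n. 2 powr (real n powr \<alpha>) \<le> real (growth G S (C * n))"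
    using assms(5) unfolding dominates_def by blast
  have Sne: "S \<noteq> {}"
  proof
    assume "S = {}"
    then have "{g. \<exists>w\<in>lists S. length w \<le> C * 1 \<and> eval_word G w = g} = {\<one>\<^bsub>G\<^esub>}" by auto
    then have "growth G S (C * 1) = 1" unfolding growth_def by simp
    then show False using dom[of 1] by simp
  qed
  then obtain s where s: "s \<in> S" by blast
  define pad where "pad m = concat (replicate m [s, inv\<^bsub>G\<^esub> s])" for m
  have sc: "s \<in> carrier G" "inv\<^bsub>G\<^esub> s \<in> carrier G" using s S by auto
  have pad: "pad m \<in> lists S \<and> length (pad m) = 2 * m \<and> eval_word G (pad m) = \<one>\<^bsub>G\<^esub>" for m
  proof (induction m)
    case 0 then show ?case by (simp add: pad_def)
  next
    case (Suc m)
    have e: "pad (Suc m) = [s, inv\<^bsub>G\<^esub> s] @ pad m" by (simp add: pad_def)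
    have "set (pad m) \<subseteq> carrier G" using Suc S by auto
    then have pc: "eval_word G (pad m) \<in> carrier G" using eval_word_closed[OF grp] by blast
    have "eval_word G (pad (Suc m)) = s \<otimes>\<^bsub>G\<^esub> (inv\<^bsub>G\<^esub> s \<otimes>\<^bsub>G\<^esub> eval_word G (pad m))"
      unfolding e by simp
    also have "\<dots> = (s \<otimes>\<^bsub>G\<^esub> inv\<^bsub>G\<^esub> s) \<otimes>\<^bsub>G\<^esub> eval_word G (pad m)"
      by (rule G.m_assoc[OF sc(1) sc(2) pc, symmetric])
    also have "\<dots> = \<one>\<^bsub>G\<^esub>" using Suc sc pc by simp
    finally show ?case using Suc e s S by auto
  qed
  have key: "\<exists>l. 2 * (C * n) \<le> l + 2 \<and> l \<le> 4 * (C * n) \<and>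
       (\<forall>L. real ((card Q + 1) ^ L) * 4 \<le> 2 powr (real n powr \<alpha>) \<longrightarrow> C * n * L \<le> T l)"
    if n: "n \<ge> 1" for n
  proof -
    define m where "m = C * n"
    define B where "B = {g. \<exists>w\<in>lists S. length w \<le> m \<and> eval_word G w = g}"
    define E where "E k = eval_word G ` {w. set w \<subseteq> S \<and> length w = k}" for k
    have Ef: "finite (E k)" for k unfolding E_def using finite_lists_length_eq[OF S(1)] by simp
    have BE: "B \<subseteq> E m \<union> E (m - 1)"
    proof
      fix g assume "g \<in> B"
      then obtain w where w: "w \<in> lists S" "length w \<le> m" "eval_word G w = g" unfolding B_def by blast
      define w' where "w' = w @ pad ((m - length w) div 2)"
      have c1: "set w \<subseteq> carrier G" and c2: "set (pad ((m - length w) div 2)) \<subseteq> carrier G"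
        using w(1) pad S by auto
      have gc: "g \<in> carrier G" using eval_word_closed[OF grp c1] w(3) by simp
      have ew: "eval_word G w' = g"
        unfolding w'_def using eval_word_append[OF grp c1 c2] pad w(3) gc by simp
      have lw: "length w' = m \<or> length w' = m - 1"
        unfolding w'_def using pad w(2) by simp presburger
      have "w' \<in> lists S" unfolding w'_def using w(1) pad by simp
      then show "g \<in> E m \<union> E (m - 1)" using lw ew unfolding E_def by (auto simp: lists_eq_set)
    qed
    have "card B \<le> card (E m \<union> E (m - 1))" using BE Ef by (intro card_mono) auto
    also have "\<dots> \<le> card (E m) + card (E (m - 1))" by (rule card_Un_le)
    finally have "card B \<le> card (E m) + card (E (m - 1))" .
    then obtain k where k: "k = m \<or> k = m - 1" "card B \<le> 2 * card (E k)"
      by (metis le_add_same_cancel1 mult_2 add_le_mono nat_le_linear order.trans)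
    define rep where "rep g = (SOME w. w \<in> lists S \<and> length w = k \<and> eval_word G w = g)" for g
    have rep: "rep g \<in> lists S \<and> length (rep g) = k \<and> eval_word G (rep g) = g" if "g \<in> E k" for g
    proof -
      have "\<exists>w. w \<in> lists S \<and> length w = k \<and> eval_word G w = g"
        using that unfolding E_def by (auto simp: lists_eq_set)
      then show ?thesis unfolding rep_def by (rule someI_ex)
    qed
    define A where "A = rep ` E k"
    have injr: "inj_on rep (E k)" using rep by (metis inj_onI)
    have A: "finite A" "A \<subseteq> lists S" "\<forall>u\<in>A. length u = k" "inj_on (eval_word G) A"
      using Ef rep unfolding A_def by (auto intro!: inj_onI)
    have cA: "card A = card (E k)" unfolding A_def using injr by (simp add: card_image)
    define l where "l = 2 * k + length (pad m)"
    have l: "2 * m \<le> l + 2" "l \<le> 4 * m" using k(1) pad[of m] unfolding l_def by auto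
    have "C * n * L \<le> T l" if L: "real ((card Q + 1) ^ L) * 4 \<le> 2 powr (real n powr \<alpha>)" for L
    proof -
      define X where "X = (card Q + 1) ^ L"
      define N where "N = card A"
      have "real X * 4 \<le> real (growth G S m)" using L dom[of n] unfolding X_def m_def by linarith
      also have "growth G S m = card B" unfolding growth_def B_def by simp
      finally have "real X * 4 \<le> real (2 * N)" using k(2) cA unfolding N_def by linarith
      then have NX: "2 * X \<le> N" by simp
      have Xp: "X \<ge> 1" unfolding X_def by simp
      have Np: "N > 0" using NX Xp by simp
      have tl: "(2 * m + 1) * (L * (N - X)) \<le> N * T l"
        using time_lower[OF grp S(2,3) M dec A conjunct1[OF pad[of m]] conjunct2[OF conjunct2[OF pad[of m]]], of L]
        pad[of m] unfolding l_def N_def X_def by simp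
      have "N \<le> 2 * (N - X)" using NX by simp
      then have "(2 * m + 1) * (L * N) \<le> (2 * m + 1) * (L * (2 * (N - X)))" by (intro mult_le_mono2)
      also have "\<dots> = 2 * ((2 * m + 1) * (L * (N - X)))" by simp
      also have "\<dots> \<le> 2 * (N * T l)" using tl by simp
      finally have "N * ((2 * m + 1) * L) \<le> N * (2 * T l)" by (simp add: algebra_simps)
      then have "(2 * m + 1) * L \<le> 2 * T l" using Np by simp
      then show ?thesis unfolding m_def by (simp add: algebra_simps)
    qed
    then show ?thesis using l unfolding m_def by blast
  qed
  show False
    by (rule asymp_contra[OF assms(3) C q o key])
qed


end
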